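(* Fix $\gamma>0$ and a realisation of the training data. Let $\mathcal A_n$ be any maximal subset of $[n]$ such that the vectors $(\|1_{\mathcal X}\|_{\mathcal H}^2,1,\ldots,1)^\top\in\mathbb R^{n+1}$ and $(1,k(X_i,X_1),\ldots,k(X_i,X_n))^\top\in\mathbb R^{n+1}$, $i\in\mathcal A_n$, are linearly independent. Let $\bar k(y)=\frac1n\sum_{i=1}^nk(X_i,y)$, $\tilde k(x,y)=k(x,y)-\bar k(y)$, and for $\beta\in\mathbb R^{\mathcal A_n}$ let $f_\beta(x)=\sum_{i\in\mathcal A_n}\tilde k(x,X_i)\beta_i$. Then $\beta\mapsto\ell_{n,\gamma}(f_\beta)$ is strongly convex on $\mathbb R^{\mathcal A_n}$, and writing $\hat\beta$ for its unique minimiser, $f_{\hat\beta}$ is the unique minimiser of $f\mapsto\ell_{n,\gamma}(f)$ over $f\in\mathcal H$.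
   Context: Let $\mathcal X$ be a locally compact metric space in which every open set is $\sigma$-compact. Let $k:\mathcal X\times\mathcal X\to\mathbb R$ be a continuous, symmetric, positive semidefinite kernel with RKHS $\mathcal H$, and assume $k-\delta$ is positive semidefinite for some $\delta>0$, so the constant function $1_{\mathcal X}\in\mathcal H$. Data: points $X_1,\ldots,X_n\in\mathcal X$, times $T_i\in(0,\infty)$, indicators $I_i\in\{0,1\}$. Define $N_i(t)=\mathbb 1\{T_i\le t,\ I_i=0\}$, $R_i(t)=\mathbb 1\{T_i\ge t\}$, $S_n(f,t)=\frac1n\sum_{i=1}^nR_i(t)e^{f(X_i)}$, $P_n(f)=\frac1n\sum_{i=1}^nf(X_i)$, $\ell_n(f)=\frac1n\sum_{i=1}^n N_i(1)\log S_n(f,T_i)-\frac1n\sum_{i=1}^n f(X_i)N_i(1)$, and for $\gamma>0$ the penalised objective $\ell_{n,\gamma}(f)=\ell_n(f)+\gamma\|f-P_n(f)1_{\mathcal X}\|_{\mathcal H}^2+\gamma P_n(f)^2$ for $f\in\mathcal H$. *)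

theory Defs
  imports "HOL-Analysis.Analysis"
begin

definition psd_kernel :: "('a \<Rightarrow> 'a \<Rightarrow> real) \<Rightarrow> bool" where
  "psd_kernel k \<longleftrightarrow>
     (\<forall>(m::nat) (x::nat \<Rightarrow> 'a) (c::nat \<Rightarrow> real).
        (\<Sum>i<m. \<Sum>j<m. c i * c j * k (x i) (x j)) \<ge> 0)"

definition sigma_compact :: "'a::topological_space set \<Rightarrow> bool" where
  "sigma_compact U \<longleftrightarrow> (\<exists>C::nat \<Rightarrow> 'a set. (\<forall>m. compact (C m)) \<and> U = (\<Union>m. C m))"

definition rkhs :: "('a \<Rightarrow> 'a \<Rightarrow> real) \<Rightarrow> ('a \<Rightarrow> real) set
                     \<Rightarrow> (('a \<Rightarrow> real) \<Rightarrow> ('a \<Rightarrow> real) \<Rightarrow> real) \<Rightarrow> bool" where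
  "rkhs k H ip \<longleftrightarrow>
     (\<lambda>_. 0) \<in> H \<and>
     (\<forall>f\<in>H. \<forall>g\<in>H. \<forall>a b. (\<lambda>x. a * f x + b * g x) \<in> H) \<and>
     (\<forall>f\<in>H. \<forall>g\<in>H. ip f g = ip g f) \<and>
     (\<forall>f\<in>H. \<forall>g\<in>H. \<forall>h\<in>H. \<forall>a b. ip (\<lambda>x. a * f x + b * g x) h = a * ip f h + b * ip g h) \<and>
     (\<forall>f\<in>H. ip f f \<ge> 0) \<and>
     (\<forall>f\<in>H. ip f f = 0 \<longrightarrow> f = (\<lambda>_. 0)) \<and>
     (\<forall>s::nat \<Rightarrow> ('a \<Rightarrow> real).
        (\<forall>m. s m \<in> H) \<and>
        (\<forall>e>0. \<exists>N. \<forall>m\<ge>N. \<forall>p\<ge>N. ip (\<lambda>x. s m x - s p x) (\<lambda>x. s m x - s p x) < e)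
        \<longrightarrow> (\<exists>f\<in>H. \<forall>e>0. \<exists>N. \<forall>m\<ge>N. ip (\<lambda>x. s m x - f x) (\<lambda>x. s m x - f x) < e)) \<and>
     (\<forall>y. (\<lambda>x. k x y) \<in> H) \<and>
     (\<forall>f\<in>H. \<forall>y. ip f (\<lambda>x. k x y) = f y)"

definition hnorm2 :: "(('a \<Rightarrow> real) \<Rightarrow> ('a \<Rightarrow> real) \<Rightarrow> real) \<Rightarrow> ('a \<Rightarrow> real) \<Rightarrow> real" where
  "hnorm2 ip f = ip f f"

definition Nproc :: "(nat \<Rightarrow> real) \<Rightarrow> (nat \<Rightarrow> nat) \<Rightarrow> nat \<Rightarrow> real \<Rightarrow> real" where
  "Nproc T I i t = (if T i \<le> t \<and> I i = 0 then 1 else 0)"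

definition Rproc :: "(nat \<Rightarrow> real) \<Rightarrow> nat \<Rightarrow> real \<Rightarrow> real" where
  "Rproc T i t = (if T i \<ge> t then 1 else 0)"

(* data indexed by i \<in> {0..<n} (i.e. [n] relabelled) *)
definition S_n :: "nat \<Rightarrow> (nat \<Rightarrow> 'a) \<Rightarrow> (nat \<Rightarrow> real) \<Rightarrow> ('a \<Rightarrow> real) \<Rightarrow> real \<Rightarrow> real" where
  "S_n n X T f t = (1 / real n) * (\<Sum>i<n. Rproc T i t * exp (f (X i)))"

definition P_n :: "nat \<Rightarrow> (nat \<Rightarrow> 'a) \<Rightarrow> ('a \<Rightarrow> real) \<Rightarrow> real" where
  "P_n n X f = (1 / real n) * (\<Sum>i<n. f (X i))"

definition ell_n :: "nat \<Rightarrow> (nat \<Rightarrow> 'a) \<Rightarrow> (nat \<Rightarrow> real) \<Rightarrow> (nat \<Rightarrow> nat) \<Rightarrow> ('a \<Rightarrow> real) \<Rightarrow> real" where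
  "ell_n n X T I f =
     (1 / real n) * (\<Sum>i<n. Nproc T I i 1 * ln (S_n n X T f (T i)))
     - (1 / real n) * (\<Sum>i<n. f (X i) * Nproc T I i 1)"

definition ell_pen ::
  "(('a \<Rightarrow> real) \<Rightarrow> ('a \<Rightarrow> real) \<Rightarrow> real) \<Rightarrow> real \<Rightarrow> nat \<Rightarrow> (nat \<Rightarrow> 'a) \<Rightarrow> (nat \<Rightarrow> real)
     \<Rightarrow> (nat \<Rightarrow> nat) \<Rightarrow> ('a \<Rightarrow> real) \<Rightarrow> real" where
  "ell_pen ip \<gamma> n X T I f =
     ell_n n X T I f
     + \<gamma> * hnorm2 ip (\<lambda>x. f x - P_n n X f * 1)
     + \<gamma> * (P_n n X f)\<^sup>2"

(* the vectors of R^{n+1}, components indexed 0..n *)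
definition v0 :: "(('a \<Rightarrow> real) \<Rightarrow> ('a \<Rightarrow> real) \<Rightarrow> real) \<Rightarrow> nat \<Rightarrow> real" where
  "v0 ip j = (if j = 0 then hnorm2 ip (\<lambda>_. 1) else 1)"

definition wvec :: "('a \<Rightarrow> 'a \<Rightarrow> real) \<Rightarrow> (nat \<Rightarrow> 'a) \<Rightarrow> nat \<Rightarrow> nat \<Rightarrow> real" where
  "wvec k X i j = (if j = 0 then 1 else k (X i) (X (j - 1)))"

definition indep_family ::
  "(('a \<Rightarrow> real) \<Rightarrow> ('a \<Rightarrow> real) \<Rightarrow> real) \<Rightarrow> ('a \<Rightarrow> 'a \<Rightarrow> real) \<Rightarrow> nat \<Rightarrow> (nat \<Rightarrow> 'a)
     \<Rightarrow> nat set \<Rightarrow> bool" where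
  "indep_family ip k n X A \<longleftrightarrow>
     (\<forall>(c0::real) (c::nat \<Rightarrow> real).
        (\<forall>j\<le>n. c0 * v0 ip j + (\<Sum>i\<in>A. c i * wvec k X i j) = 0)
        \<longrightarrow> c0 = 0 \<and> (\<forall>i\<in>A. c i = 0))"

definition kbar :: "('a \<Rightarrow> 'a \<Rightarrow> real) \<Rightarrow> nat \<Rightarrow> (nat \<Rightarrow> 'a) \<Rightarrow> 'a \<Rightarrow> real" where
  "kbar k n X y = (1 / real n) * (\<Sum>i<n. k (X i) y)"

definition ktilde :: "('a \<Rightarrow> 'a \<Rightarrow> real) \<Rightarrow> nat \<Rightarrow> (nat \<Rightarrow> 'a) \<Rightarrow> 'a \<Rightarrow> 'a \<Rightarrow> real" where
  "ktilde k n X x y = k x y - kbar k n X y"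

(* f_beta, for beta \<in> R^A represented as nat \<Rightarrow> real (only values on A matter) *)
definition f_beta :: "('a \<Rightarrow> 'a \<Rightarrow> real) \<Rightarrow> nat \<Rightarrow> (nat \<Rightarrow> 'a) \<Rightarrow> nat set \<Rightarrow> (nat \<Rightarrow> real) \<Rightarrow> 'a \<Rightarrow> real" where
  "f_beta k n X A \<beta> x = (\<Sum>i\<in>A. ktilde k n X x (X i) * \<beta> i)"

(* R^A as the functions nat \<Rightarrow> real vanishing outside A *)
definition coords :: "nat set \<Rightarrow> (nat \<Rightarrow> real) set" where
  "coords A = {\<beta>. \<forall>i. i \<notin> A \<longrightarrow> \<beta> i = 0}"

definition strongly_convex_coords :: "nat set \<Rightarrow> ((nat \<Rightarrow> real) \<Rightarrow> real) \<Rightarrow> bool" where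
  "strongly_convex_coords A g \<longleftrightarrow>
     (\<exists>\<mu>>0. \<forall>\<beta>\<in>coords A. \<forall>\<beta>'\<in>coords A. \<forall>t::real. 0 \<le> t \<and> t \<le> 1 \<longrightarrow>
        g (\<lambda>i. t * \<beta> i + (1 - t) * \<beta>' i)
          \<le> t * g \<beta> + (1 - t) * g \<beta>' - \<mu> / 2 * t * (1 - t) * (\<Sum>i\<in>A. (\<beta> i - \<beta>' i)\<^sup>2))"

end

theory Submission
  imports Defs
begin


lemma cont_coord [continuous_intros]: "continuous_on S (\<lambda>x::nat\<Rightarrow>real. x i)"
  by (rule continuous_on_subset[OF continuous_on_product_coordinates]) simp

lemma compact_box: "compact {\<beta>::nat\<Rightarrow>real. \<forall>i. (i\<in>A \<longrightarrow> \<bar>\<beta> i\<bar> \<le> R) \<and> (i\<notin>A \<longrightarrow> \<beta> i = 0)}"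
proof -
  have eq: "{\<beta>::nat\<Rightarrow>real. \<forall>i. (i\<in>A \<longrightarrow> \<bar>\<beta> i\<bar> \<le> R) \<and> (i\<notin>A \<longrightarrow> \<beta> i = 0)}
     = PiE UNIV (\<lambda>i. if i\<in>A then {-R..R} else {0})"
    by (auto simp: PiE_def Pi_def abs_le_iff split: if_splits)
  have "compactin (product_topology (\<lambda>i. euclidean) UNIV) (PiE UNIV (\<lambda>i. if i\<in>A then {-R..R} else ({0}::real set)))"
    by (subst compactin_PiE) auto
  then show ?thesis unfolding eq euclidean_product_topology by simp
qed

lemma coercive_min:
  fixes h :: "(nat\<Rightarrow>real) \<Rightarrow> real"
  assumes fin: "finite A" and cont: "continuous_on (coords A) h"
    and c: "c > 0" and bd: "\<forall>\<beta>\<in>coords A. h \<beta> \<ge> a + c * (\<Sum>i\<in>A. (\<beta> i)\<^sup>2)"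
  shows "\<exists>\<beta>\<in>coords A. \<forall>\<beta>'\<in>coords A. h \<beta> \<le> h \<beta>'"
proof -
  define R where "R = (\<bar>h (\<lambda>_. 0) - a\<bar> + 1) / c + 1"
  have R1: "R \<ge> 1" using c by (simp add: R_def)
  have "R \<ge> (\<bar>h (\<lambda>_. 0) - a\<bar> + 1) / c" by (simp add: R_def)
  then have "c * R \<ge> \<bar>h (\<lambda>_. 0) - a\<bar> + 1" using c by (simp add: field_simps)
  moreover have "R\<^sup>2 \<ge> R" using R1 by (simp add: power2_eq_square)
  moreover have "c * R\<^sup>2 \<ge> c * R" using c \<open>R\<^sup>2 \<ge> R\<close> by (simp add: mult_left_mono)
  ultimately have cR: "c * R\<^sup>2 > h (\<lambda>_. 0) - a" by linarith
  define K where "K = {\<beta>::nat\<Rightarrow>real. \<forall>i. (i\<in>A \<longrightarrow> \<bar>\<beta> i\<bar> \<le> R) \<and> (i\<notin>A \<longrightarrow> \<beta> i = 0)}"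
  have Ksub: "K \<subseteq> coords A" by (auto simp: K_def coords_def)
  have zK: "(\<lambda>_. 0) \<in> K" using R1 by (auto simp: K_def)
  obtain \<beta>0 where b0: "\<beta>0 \<in> K" "\<forall>y\<in>K. h \<beta>0 \<le> h y"
  proof -
    have "compact K" unfolding K_def by (rule compact_box)
    moreover have "K \<noteq> {}" using zK by blast
    ultimately show ?thesis using continuous_attains_inf[of K h] continuous_on_subset[OF cont Ksub] that by blast
  qed
  show ?thesis
  proof (intro bexI ballI)
    show "\<beta>0 \<in> coords A" using b0 Ksub by blast
    fix \<beta>' assume b': "\<beta>' \<in> coords A"
    show "h \<beta>0 \<le> h \<beta>'"
    proof (cases "\<beta>' \<in> K")
      case True then show ?thesis using b0 by blast
    next
      case False
      then obtain i where i: "i \<in> A" "\<bar>\<beta>' i\<bar> > R" using b' by (auto simp: K_def coords_def)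
      have "R\<^sup>2 \<le> \<bar>\<beta>' i\<bar>\<^sup>2" using i R1 by (intro power_mono) auto
      also have "\<dots> = (\<beta>' i)\<^sup>2" by simp
      also have "\<dots> \<le> (\<Sum>i\<in>A. (\<beta>' i)\<^sup>2)"
        by (rule member_le_sum) (use i fin in auto)
      finally have "c * R\<^sup>2 \<le> c * (\<Sum>i\<in>A. (\<beta>' i)\<^sup>2)" using c by (simp add: mult_left_mono)
      then have "h \<beta>' \<ge> a + c * R\<^sup>2" using bd b' by force
      then show ?thesis using cR b0 zK by force
    qed
  qed
qed

lemma quad_pd:
  fixes q :: "(nat\<Rightarrow>real) \<Rightarrow> real"
  assumes fin: "finite B" and cont: "continuous_on (coords B) q"
    and hom: "\<forall>c\<in>coords B. \<forall>s. q (\<lambda>i. s * c i) = s\<^sup>2 * q c"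
    and pos: "\<forall>c\<in>coords B. (\<exists>i\<in>B. c i \<noteq> 0) \<longrightarrow> q c > 0"
  shows "\<exists>l>0. \<forall>c\<in>coords B. q c \<ge> l * (\<Sum>i\<in>B. (c i)\<^sup>2)"
proof (cases "B = {}")
  case True
  show ?thesis
  proof (intro exI[of _ 1] conjI ballI)
    fix c assume c: "c \<in> coords B"
    have "c = (\<lambda>i. 0 * c i)" using c True by (auto simp: coords_def)
    then have "q c = 0" using hom c by (metis mult_eq_0_iff zero_power2)
    then show "q c \<ge> 1 * (\<Sum>i\<in>B. (c i)\<^sup>2)" using True by simp
  qed simp
next
  case False
  then obtain b where b: "b \<in> B" by blast
  define K where "K = {\<beta>::nat\<Rightarrow>real. \<forall>i. (i\<in>B \<longrightarrow> \<bar>\<beta> i\<bar> \<le> 1) \<and> (i\<notin>B \<longrightarrow> \<beta> i = 0)}"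
  define S where "S = K \<inter> {c. (\<Sum>i\<in>B. (c i)\<^sup>2) = 1}"
  have Ssub: "S \<subseteq> coords B" by (auto simp: S_def K_def coords_def)
  have "compact K" unfolding K_def by (rule compact_box)
  moreover have "closed {c::nat\<Rightarrow>real. (\<Sum>i\<in>B. (c i)\<^sup>2) = 1}"
    by (intro closed_Collect_eq continuous_intros)
  ultimately have cS: "compact S" unfolding S_def by blast
  define e where "e = (\<lambda>i. if i = b then 1 else (0::real))"
  have "(\<Sum>i\<in>B. (e i)\<^sup>2) = (\<Sum>i\<in>B. if i = b then 1 else 0)"
    by (rule sum.cong) (auto simp: e_def)
  also have "\<dots> = 1" using fin b by simp
  finally have "e \<in> S" using b by (auto simp: S_def K_def e_def)
  then have "S \<noteq> {}" by blast
  then obtain c0 where c0: "c0 \<in> S" "\<forall>y\<in>S. q c0 \<le> q y"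
    using continuous_attains_inf[OF cS _ continuous_on_subset[OF cont Ssub]] by blast
  have "\<exists>i\<in>B. c0 i \<noteq> 0"
  proof (rule ccontr)
    assume "\<not> ?thesis"
    then have "(\<Sum>i\<in>B. (c0 i)\<^sup>2) = 0" by simp
    then show False using c0 by (simp add: S_def)
  qed
  then have lpos: "q c0 > 0" using pos c0 Ssub by blast
  show ?thesis
  proof (intro exI[of _ "q c0"] conjI ballI lpos)
    fix c assume c: "c \<in> coords B"
    define s where "s = sqrt (\<Sum>i\<in>B. (c i)\<^sup>2)"
    have sum_nn: "(\<Sum>i\<in>B. (c i)\<^sup>2) \<ge> 0" by (simp add: sum_nonneg)
    have s2: "s\<^sup>2 = (\<Sum>i\<in>B. (c i)\<^sup>2)" using sum_nn by (simp add: s_def)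
    show "q c \<ge> q c0 * (\<Sum>i\<in>B. (c i)\<^sup>2)"
    proof (cases "s = 0")
      case True
      then have z: "\<forall>i\<in>B. c i = 0" using s2 fin by (simp add: sum_nonneg_eq_0_iff)
      have "c = (\<lambda>i. 0 * c i)" using c z by (auto simp: coords_def)
      then have "q c = 0" using hom c by (metis mult_eq_0_iff zero_power2)
      then show ?thesis using s2 True by simp
    next
      case False
      then have spos: "s > 0" using s_def sum_nn by simp
      define d where "d = (\<lambda>i. (1/s) * c i)"
      have dB: "d \<in> coords B" using c by (auto simp: coords_def d_def)
      have "(\<Sum>i\<in>B. (d i)\<^sup>2) = (\<Sum>i\<in>B. (c i)\<^sup>2) / s\<^sup>2"
        by (simp add: d_def power_divide sum_divide_distrib)
      also have "\<dots> = 1" using s2 spos by (metis less_numeral_extra(3) power_not_zero divide_self)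
      finally have dsum: "(\<Sum>i\<in>B. (d i)\<^sup>2) = 1" .
      have "\<forall>i\<in>B. \<bar>d i\<bar> \<le> 1"
      proof
        fix i assume i: "i \<in> B"
        have "(d i)\<^sup>2 \<le> (\<Sum>i\<in>B. (d i)\<^sup>2)" by (rule member_le_sum) (use i fin in auto)
        then have "\<bar>d i\<bar>\<^sup>2 \<le> 1\<^sup>2" using dsum by simp
        then show "\<bar>d i\<bar> \<le> 1" using power2_le_imp_le[of "\<bar>d i\<bar>" 1] by simp
      qed
      then have "d \<in> S" using dB dsum by (auto simp: S_def K_def coords_def)
      then have qd: "q d \<ge> q c0" using c0 by blast
      have "c = (\<lambda>i. s * d i)" using spos by (auto simp: d_def)
      then have "q c = s\<^sup>2 * q d" using hom dB by metis
      also have "\<dots> \<ge> s\<^sup>2 * q c0" using qd by (simp add: mult_left_mono)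
      finally show ?thesis using s2 by (simp add: mult.commute)
    qed
  qed
qed



lemma exp_conv2: "0 \<le> (t::real) \<Longrightarrow> t \<le> 1 \<Longrightarrow> exp (t * x + (1 - t) * y) \<le> t * exp x + (1 - t) * exp y"
  using convex_onD[OF exp_convex, of "1 - t" x y] by (simp add: add.commute)

lemma Rproc_nn: "Rproc T j t \<ge> 0" by (simp add: Rproc_def)
lemma Nproc_01: "Nproc T I i t = 0 \<or> Nproc T I i t = 1" by (simp add: Nproc_def)

lemma S_ge:
  assumes "i < n"
  shows "S_n n X T f (T i) \<ge> (1 / real n) * exp (f (X i))"
proof -
  have "Rproc T i (T i) * exp (f (X i)) \<le> (\<Sum>j<n. Rproc T j (T i) * exp (f (X j)))"
    by (rule member_le_sum) (use assms in \<open>auto simp: Rproc_nn\<close>)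
  then show ?thesis unfolding S_n_def by (simp add: Rproc_def divide_right_mono)
qed

lemma S_pos: "i < n \<Longrightarrow> S_n n X T f (T i) > 0"
proof -
  assume i: "i < n"
  have "(1 / real n) * exp (f (X i)) > 0" using i by simp
  then show ?thesis using S_ge[where i=i and n=n and X=X and T=T and f=f] i by linarith
qed

lemma S_cong: "(\<forall>j<n. f (X j) = g (X j)) \<Longrightarrow> S_n n X T f t = S_n n X T g t"
  unfolding S_n_def by simp

lemma P_cong: "(\<forall>j<n. f (X j) = g (X j)) \<Longrightarrow> P_n n X f = P_n n X g"
  unfolding P_n_def by simp

lemma ell_cong: assumes "\<forall>j<n. f (X j) = g (X j)" shows "ell_n n X T I f = ell_n n X T I g"
proof -
  have "S_n n X T f t = S_n n X T g t" for t unfolding S_n_def using assms by simp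
  then show ?thesis unfolding ell_n_def using assms by simp
qed

lemma S_shift: "S_n n X T (\<lambda>x. a + f x) t = exp a * S_n n X T f t"
  unfolding S_n_def by (simp add: exp_add sum_distrib_left algebra_simps)

lemma ell_shift:
  assumes "n > 0"
  shows "ell_n n X T I (\<lambda>x. a + f x) = ell_n n X T I f"
proof -
  have "(\<Sum>i<n. Nproc T I i 1 * ln (S_n n X T (\<lambda>x. a + f x) (T i)))
      = (\<Sum>i<n. Nproc T I i 1 * a + Nproc T I i 1 * ln (S_n n X T f (T i)))"
  proof (rule sum.cong)
    fix i assume "i \<in> {..<n}"
    then have "S_n n X T f (T i) > 0" using S_pos by auto
    then show "Nproc T I i 1 * ln (S_n n X T (\<lambda>x. a + f x) (T i)) = Nproc T I i 1 * a + Nproc T I i 1 * ln (S_n n X T f (T i))"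
      by (simp add: S_shift ln_mult algebra_simps)
  qed simp
  moreover have "(\<Sum>i<n. (a + f (X i)) * Nproc T I i 1) = (\<Sum>i<n. Nproc T I i 1 * a + f (X i) * Nproc T I i 1)"
    by (simp add: algebra_simps)
  ultimately show ?thesis unfolding ell_n_def by (simp add: sum.distrib algebra_simps)
qed

lemma ell_lower:
  assumes "n > 0"
  shows "ell_n n X T I f \<ge> - ln (real n)"
proof -
  have eq: "ell_n n X T I f = (1 / real n) * (\<Sum>i<n. Nproc T I i 1 * (ln (S_n n X T f (T i)) - f (X i)))"
    unfolding ell_n_def by (simp add: sum_subtractf algebra_simps right_diff_distrib)
  have "\<forall>i\<in>{..<n}. Nproc T I i 1 * (ln (S_n n X T f (T i)) - f (X i)) \<ge> - ln (real n)"
  proof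
    fix i assume i: "i \<in> {..<n}"
    have "ln (S_n n X T f (T i)) \<ge> ln ((1 / real n) * exp (f (X i)))"
      using S_ge[where i=i and n=n and X=X and T=T and f=f] i assms S_pos[where i=i and n=n and X=X and T=T and f=f]
      by (subst ln_le_cancel_iff) auto
    also have "ln ((1 / real n) * exp (f (X i))) = f (X i) - ln (real n)"
      using assms by (simp add: ln_mult ln_div)
    finally have a: "ln (S_n n X T f (T i)) - f (X i) \<ge> - ln (real n)" by simp
    have "ln (real n) \<ge> 0" using assms by simp
    then show "Nproc T I i 1 * (ln (S_n n X T f (T i)) - f (X i)) \<ge> - ln (real n)"
      using Nproc_01[of T I i 1] a by auto
  qed
  then have "(\<Sum>i<n. Nproc T I i 1 * (ln (S_n n X T f (T i)) - f (X i))) \<ge> (\<Sum>i<n. - ln (real n))"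
    by (intro sum_mono) auto
  then have "(\<Sum>i<n. Nproc T I i 1 * (ln (S_n n X T f (T i)) - f (X i))) \<ge> - real n * ln (real n)"
    by simp
  then have "(1 / real n) * (\<Sum>i<n. Nproc T I i 1 * (ln (S_n n X T f (T i)) - f (X i))) \<ge> (1 / real n) * (- real n * ln (real n))"
    using assms by (intro mult_left_mono) auto
  then show ?thesis using eq assms by simp
qed

lemma aux_dist: "(c::real) * (a * x + b * y) = a * (c * x) + b * (c * y)"
  by (simp add: algebra_simps)

lemma S_convex:
  assumes i: "i < n" and t: "0 \<le> t" "t \<le> 1"
  shows "ln (S_n n X T (\<lambda>x. t * f x + (1 - t) * g x) (T i))
          \<le> t * ln (S_n n X T f (T i)) + (1 - t) * ln (S_n n X T g (T i))"
proof -
  define P where "P = S_n n X T f (T i)"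
  define Q where "Q = S_n n X T g (T i)"
  have P: "P > 0" and Q: "Q > 0" using S_pos i by (auto simp: P_def Q_def)
  define L where "L = t * ln P + (1 - t) * ln Q"
  have trm: "exp (t * a + (1 - t) * b) \<le> exp L * (t * (exp a / P) + (1 - t) * (exp b / Q))" for a b
  proof -
    have "exp (t * a + (1 - t) * b) = exp L * exp (t * (a - ln P) + (1 - t) * (b - ln Q))"
      by (simp add: L_def flip: exp_add) (simp add: algebra_simps)
    also have "\<dots> \<le> exp L * (t * exp (a - ln P) + (1 - t) * exp (b - ln Q))"
      using exp_conv2[OF t] by (intro mult_left_mono) auto
    also have "\<dots> = exp L * (t * (exp a / P) + (1 - t) * (exp b / Q))"
      using P Q by (simp add: exp_diff)
    finally show ?thesis .
  qed
  have "S_n n X T (\<lambda>x. t * f x + (1 - t) * g x) (T i)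
      = (1 / real n) * (\<Sum>j<n. Rproc T j (T i) * exp (t * f (X j) + (1 - t) * g (X j)))"
    by (simp add: S_n_def)
  also have "\<dots> \<le> (1 / real n) * (\<Sum>j<n. Rproc T j (T i) * (exp L * (t * (exp (f (X j)) / P) + (1 - t) * (exp (g (X j)) / Q))))"
    by (intro mult_left_mono sum_mono trm Rproc_nn) auto
  also have "(\<Sum>j<n. Rproc T j (T i) * (exp L * (t * (exp (f (X j)) / P) + (1 - t) * (exp (g (X j)) / Q))))
     = (\<Sum>j<n. (exp L * t / P) * (Rproc T j (T i) * exp (f (X j))) + (exp L * (1 - t) / Q) * (Rproc T j (T i) * exp (g (X j))))"
    by (rule sum.cong) (simp_all add: algebra_simps)
  also have "\<dots> = (exp L * t / P) * (\<Sum>j<n. Rproc T j (T i) * exp (f (X j))) + (exp L * (1 - t) / Q) * (\<Sum>j<n. Rproc T j (T i) * exp (g (X j)))"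
    by (simp add: sum.distrib sum_distrib_left)
  also have "(1 / real n) * \<dots> = (exp L * t / P) * ((1 / real n) * (\<Sum>j<n. Rproc T j (T i) * exp (f (X j))))
     + (exp L * (1 - t) / Q) * ((1 / real n) * (\<Sum>j<n. Rproc T j (T i) * exp (g (X j))))"
    by (rule aux_dist)
  also have "\<dots> = (exp L * t / P) * P + (exp L * (1 - t) / Q) * Q"
    unfolding P_def Q_def S_n_def by (rule refl)
  also have "\<dots> = exp L" using P Q by (simp add: field_simps)
  finally have le: "S_n n X T (\<lambda>x. t * f x + (1 - t) * g x) (T i) \<le> exp L" .
  have "S_n n X T (\<lambda>x. t * f x + (1 - t) * g x) (T i) > 0" using S_pos i by blast
  then have "ln (S_n n X T (\<lambda>x. t * f x + (1 - t) * g x) (T i)) \<le> ln (exp L)"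
    using le by (subst ln_le_cancel_iff) auto
  then show ?thesis by (simp add: L_def P_def Q_def)
qed

lemma aux_lin: "(a::real) * x \<le> a * (t * y + (1 - t) * z) \<Longrightarrow>
  a * x - a * (t * F + (1 - t) * G) \<le> t * (a * y - a * F) + (1 - t) * (a * z - a * G)"
  by (simp add: algebra_simps)

lemma ell_convex:
  assumes t: "0 \<le> t" "t \<le> 1" and n: "n > 0"
  shows "ell_n n X T I (\<lambda>x. t * f x + (1 - t) * g x) \<le> t * ell_n n X T I f + (1 - t) * ell_n n X T I g"
proof -
  have "(\<Sum>i<n. Nproc T I i 1 * ln (S_n n X T (\<lambda>x. t * f x + (1 - t) * g x) (T i)))
     \<le> (\<Sum>i<n. Nproc T I i 1 * (t * ln (S_n n X T f (T i)) + (1 - t) * ln (S_n n X T g (T i))))"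
    by (intro sum_mono mult_left_mono S_convex t) (auto simp: Nproc_def)
  also have "\<dots> = (\<Sum>i<n. t * (Nproc T I i 1 * ln (S_n n X T f (T i))) + (1 - t) * (Nproc T I i 1 * ln (S_n n X T g (T i))))"
    by (rule sum.cong) (simp_all add: algebra_simps)
  also have "\<dots> = t * (\<Sum>i<n. Nproc T I i 1 * ln (S_n n X T f (T i))) + (1 - t) * (\<Sum>i<n. Nproc T I i 1 * ln (S_n n X T g (T i)))"
    by (simp add: sum_distrib_left sum.distrib)
  finally have A: "(\<Sum>i<n. Nproc T I i 1 * ln (S_n n X T (\<lambda>x. t * f x + (1 - t) * g x) (T i)))
     \<le> t * (\<Sum>i<n. Nproc T I i 1 * ln (S_n n X T f (T i))) + (1 - t) * (\<Sum>i<n. Nproc T I i 1 * ln (S_n n X T g (T i)))" .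
  have "(\<Sum>i<n. (t * f (X i) + (1 - t) * g (X i)) * Nproc T I i 1)
     = (\<Sum>i<n. t * (f (X i) * Nproc T I i 1) + (1 - t) * (g (X i) * Nproc T I i 1))"
    by (rule sum.cong) (simp_all add: algebra_simps)
  also have "\<dots> = t * (\<Sum>i<n. f (X i) * Nproc T I i 1) + (1 - t) * (\<Sum>i<n. g (X i) * Nproc T I i 1)"
    by (simp add: sum_distrib_left sum.distrib)
  finally have B: "(\<Sum>i<n. (t * f (X i) + (1 - t) * g (X i)) * Nproc T I i 1)
     = t * (\<Sum>i<n. f (X i) * Nproc T I i 1) + (1 - t) * (\<Sum>i<n. g (X i) * Nproc T I i 1)" .
  have "(1 / real n) * (\<Sum>i<n. Nproc T I i 1 * ln (S_n n X T (\<lambda>x. t * f x + (1 - t) * g x) (T i)))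
     \<le> (1 / real n) * (t * (\<Sum>i<n. Nproc T I i 1 * ln (S_n n X T f (T i))) + (1 - t) * (\<Sum>i<n. Nproc T I i 1 * ln (S_n n X T g (T i))))"
    using A by (intro mult_left_mono) auto
  then show ?thesis unfolding ell_n_def B by (rule aux_lin)
qed



definition hfun :: "('a \<Rightarrow> 'a \<Rightarrow> real) \<Rightarrow> (nat \<Rightarrow> 'a) \<Rightarrow> real \<Rightarrow> (nat \<Rightarrow> real) \<Rightarrow> nat set \<Rightarrow> 'a \<Rightarrow> real" where
  "hfun k X c0 c A x = c0 + (\<Sum>i\<in>A. c i * k x (X i))"

definition Pq :: "('a \<Rightarrow> 'a \<Rightarrow> real) \<Rightarrow> (nat \<Rightarrow> 'a) \<Rightarrow> real \<Rightarrow> real \<Rightarrow> (nat \<Rightarrow> real) \<Rightarrow> nat set \<Rightarrow> real" where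
  "Pq k X N1 c0 c A = c0 * (c0 * N1 + (\<Sum>i\<in>A. c i)) + (\<Sum>i\<in>A. c i * (c0 + (\<Sum>m\<in>A. c m * k (X i) (X m))))"

locale rk =
  fixes k :: "'a \<Rightarrow> 'a \<Rightarrow> real" and H :: "('a \<Rightarrow> real) set" and ip
  assumes rk: "rkhs k H ip" and one_H: "(\<lambda>_. 1) \<in> H"
begin

lemma zero_H: "(\<lambda>_. 0) \<in> H" using rk unfolding rkhs_def by blast
lemma lin_H: "f \<in> H \<Longrightarrow> g \<in> H \<Longrightarrow> (\<lambda>x. a * f x + b * g x) \<in> H" using rk unfolding rkhs_def by blast
lemma ip_sym: "f \<in> H \<Longrightarrow> g \<in> H \<Longrightarrow> ip f g = ip g f" using rk unfolding rkhs_def by blast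
lemma ip_lin: "f \<in> H \<Longrightarrow> g \<in> H \<Longrightarrow> h \<in> H \<Longrightarrow> ip (\<lambda>x. a * f x + b * g x) h = a * ip f h + b * ip g h"
  using rk unfolding rkhs_def by blast
lemma ip_pos: "f \<in> H \<Longrightarrow> ip f f \<ge> 0" using rk unfolding rkhs_def by blast
lemma ip_def0: "f \<in> H \<Longrightarrow> ip f f = 0 \<Longrightarrow> f = (\<lambda>_. 0)" using rk unfolding rkhs_def by blast
lemma K_H: "(\<lambda>x. k x y) \<in> H" using rk unfolding rkhs_def by blast
lemma repr: "f \<in> H \<Longrightarrow> ip f (\<lambda>x. k x y) = f y" using rk unfolding rkhs_def by blast

lemma ip_lin_r: "f \<in> H \<Longrightarrow> g \<in> H \<Longrightarrow> h \<in> H \<Longrightarrow> ip h (\<lambda>x. a * f x + b * g x) = a * ip h f + b * ip h g"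
proof -
  assume f: "f \<in> H" and g: "g \<in> H" and h: "h \<in> H"
  have "ip h (\<lambda>x. a * f x + b * g x) = ip (\<lambda>x. a * f x + b * g x) h"
    using ip_sym[OF h lin_H[OF f g]] .
  also have "\<dots> = a * ip f h + b * ip g h" using ip_lin[OF f g h] .
  finally show ?thesis using ip_sym[OF f h] ip_sym[OF g h] by simp
qed

lemma ip_zero_r: "h \<in> H \<Longrightarrow> ip h (\<lambda>_. 0) = 0"
  using ip_lin_r[OF zero_H zero_H, of h 0 0] by simp

lemma ip_zero_l: "h \<in> H \<Longrightarrow> ip (\<lambda>_. 0) h = 0"
  using ip_zero_r[of h] ip_sym[of h "\<lambda>_. 0"] zero_H by simp

lemma sum_H: "finite S \<Longrightarrow> (\<forall>j\<in>S. u j \<in> H) \<Longrightarrow> (\<lambda>x. \<Sum>j\<in>S. c j * u j x) \<in> H"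
proof (induction S rule: finite_induct)
  case empty then show ?case using zero_H by simp
next
  case (insert a S)
  then have "(\<lambda>x. c a * u a x + 1 * (\<Sum>j\<in>S. c j * u j x)) \<in> H" by (intro lin_H) auto
  then show ?case using insert by simp
qed

lemma ip_sum_r: "finite S \<Longrightarrow> (\<forall>j\<in>S. u j \<in> H) \<Longrightarrow> h \<in> H \<Longrightarrow>
   ip h (\<lambda>x. \<Sum>j\<in>S. c j * u j x) = (\<Sum>j\<in>S. c j * ip h (u j))"
proof (induction S rule: finite_induct)
  case empty then show ?case using ip_zero_r by simp
next
  case (insert a S)
  have "ip h (\<lambda>x. c a * u a x + 1 * (\<Sum>j\<in>S. c j * u j x)) = c a * ip h (u a) + 1 * ip h (\<lambda>x. \<Sum>j\<in>S. c j * u j x)"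
    using insert by (intro ip_lin_r sum_H) auto
  then show ?case using insert by simp
qed

lemma sq_expand: "f \<in> H \<Longrightarrow> g \<in> H \<Longrightarrow>
  ip (\<lambda>x. a * f x + b * g x) (\<lambda>x. a * f x + b * g x) = a\<^sup>2 * ip f f + 2 * a * b * ip f g + b\<^sup>2 * ip g g"
proof -
  assume f: "f \<in> H" and g: "g \<in> H"
  have fg: "(\<lambda>x. a * f x + b * g x) \<in> H" using f g lin_H by blast
  have "ip (\<lambda>x. a * f x + b * g x) (\<lambda>x. a * f x + b * g x)
      = a * ip f (\<lambda>x. a * f x + b * g x) + b * ip g (\<lambda>x. a * f x + b * g x)"
    using ip_lin[OF f g fg] .
  also have "\<dots> = a * (a * ip f f + b * ip f g) + b * (a * ip g f + b * ip g g)"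
    using ip_lin_r[OF f g] f g by simp
  also have "\<dots> = a\<^sup>2 * ip f f + 2 * a * b * ip f g + b\<^sup>2 * ip g g"
    using ip_sym[OF f g] by (simp add: algebra_simps power2_eq_square)
  finally show ?thesis .
qed

lemma sq_expand_diff: "f \<in> H \<Longrightarrow> g \<in> H \<Longrightarrow>
  ip (\<lambda>x. f x - g x) (\<lambda>x. f x - g x) = ip f f - 2 * ip f g + ip g g"
  using sq_expand[of f g 1 "-1"] by simp

lemma sq_expand_sum: "f \<in> H \<Longrightarrow> g \<in> H \<Longrightarrow>
  ip (\<lambda>x. f x + g x) (\<lambda>x. f x + g x) = ip f f + 2 * ip f g + ip g g"
  using sq_expand[of f g 1 1] by simp

lemma ip_scale: "f \<in> H \<Longrightarrow> ip (\<lambda>x. s * f x) (\<lambda>x. s * f x) = s\<^sup>2 * ip f f"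
  using sq_expand[of f f s 0] by simp

lemma hfun_H: "finite A \<Longrightarrow> hfun k X c0 c A \<in> H"
proof -
  assume A: "finite A"
  have "(\<lambda>x. \<Sum>i\<in>A. c i * k x (X i)) \<in> H" using sum_H[OF A, of "\<lambda>i x. k x (X i)"] K_H by blast
  then have "(\<lambda>x. c0 * 1 + 1 * (\<Sum>i\<in>A. c i * k x (X i))) \<in> H" using one_H lin_H by blast
  then show ?thesis by (simp add: hfun_def[abs_def])
qed

lemma ip_hfun: "finite A \<Longrightarrow> f \<in> H \<Longrightarrow>
  ip f (hfun k X c0 c A) = c0 * ip f (\<lambda>_. 1) + (\<Sum>i\<in>A. c i * f (X i))"
proof -
  assume A: "finite A" and f: "f \<in> H"
  have s: "(\<lambda>x. \<Sum>i\<in>A. c i * k x (X i)) \<in> H" using sum_H[OF A, of "\<lambda>i x. k x (X i)"] K_H by blast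
  have "hfun k X c0 c A = (\<lambda>x. c0 * 1 + 1 * (\<Sum>i\<in>A. c i * k x (X i)))" by (simp add: hfun_def[abs_def])
  then have "ip f (hfun k X c0 c A) = c0 * ip f (\<lambda>_. 1) + 1 * ip f (\<lambda>x. \<Sum>i\<in>A. c i * k x (X i))"
    using ip_lin_r[OF one_H s f, of c0 1] by simp
  also have "ip f (\<lambda>x. \<Sum>i\<in>A. c i * k x (X i)) = (\<Sum>i\<in>A. c i * ip f (\<lambda>x. k x (X i)))"
    using ip_sum_r[OF A, of "\<lambda>i x. k x (X i)" f c] K_H f by blast
  also have "\<dots> = (\<Sum>i\<in>A. c i * f (X i))" using repr[OF f] by simp
  finally show ?thesis by simp
qed

lemma ip_one_hfun: "finite A \<Longrightarrow> ip (\<lambda>_. 1) (hfun k X c0 c A) = c0 * ip (\<lambda>_. 1) (\<lambda>_. 1) + (\<Sum>i\<in>A. c i)"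
  using ip_hfun[OF _ one_H] by simp

lemma hfun_quad: "finite A \<Longrightarrow>
  ip (hfun k X c0 c A) (hfun k X c0 c A) = Pq k X (ip (\<lambda>_. 1) (\<lambda>_. 1)) c0 c A"
proof -
  assume A: "finite A"
  have h: "hfun k X c0 c A \<in> H" using hfun_H[OF A] .
  have "ip (hfun k X c0 c A) (hfun k X c0 c A) = c0 * ip (hfun k X c0 c A) (\<lambda>_. 1) + (\<Sum>i\<in>A. c i * hfun k X c0 c A (X i))"
    using ip_hfun[OF A h] .
  also have "ip (hfun k X c0 c A) (\<lambda>_. 1) = c0 * ip (\<lambda>_. 1) (\<lambda>_. 1) + (\<Sum>i\<in>A. c i)"
    using ip_sym[OF h one_H] ip_one_hfun[OF A] by simp
  moreover have "\<And>i. hfun k X c0 c A (X i) = c0 + (\<Sum>m\<in>A. c m * k (X i) (X m))" by (simp add: hfun_def)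
  ultimately show ?thesis unfolding Pq_def by simp
qed

end



definition c0b :: "('a \<Rightarrow> 'a \<Rightarrow> real) \<Rightarrow> nat \<Rightarrow> (nat \<Rightarrow> 'a) \<Rightarrow> nat set \<Rightarrow> (nat \<Rightarrow> real) \<Rightarrow> real" where
  "c0b k n X A \<beta> = - (\<Sum>i\<in>A. \<beta> i * kbar k n X (X i))"

lemma sum_B: "finite A \<Longrightarrow> (\<Sum>j\<in>insert 0 (Suc ` A). F j) = F 0 + (\<Sum>i\<in>A. F (Suc i))"
  by (simp add: sum.reindex)

locale setting = rk k H ip for k :: "'a \<Rightarrow> 'a \<Rightarrow> real" and H and ip +
  fixes n :: nat and X :: "nat \<Rightarrow> 'a" and T :: "nat \<Rightarrow> real" and I :: "nat \<Rightarrow> nat" and A :: "nat set" and \<gamma> :: real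
  assumes ksym: "\<forall>x y. k x y = k y x" and npos: "n > 0" and gpos: "\<gamma> > 0"
    and Asub: "A \<subseteq> {..<n}" and Aind: "indep_family ip k n X A"
    and Amax: "\<forall>B. A \<subset> B \<and> B \<subseteq> {..<n} \<longrightarrow> \<not> indep_family ip k n X B"
begin

lemma finA: "finite A" using Asub finite_subset by blast

lemma fb_eq: "f_beta k n X A \<beta> = hfun k X (c0b k n X A \<beta>) \<beta> A"
proof
  fix x
  have "f_beta k n X A \<beta> x = (\<Sum>i\<in>A. \<beta> i * k x (X i) - \<beta> i * kbar k n X (X i))"
    unfolding f_beta_def ktilde_def by (rule sum.cong) (simp_all add: algebra_simps)
  also have "\<dots> = hfun k X (c0b k n X A \<beta>) \<beta> A x"
    unfolding hfun_def c0b_def by (simp add: sum_subtractf)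
  finally show "f_beta k n X A \<beta> x = hfun k X (c0b k n X A \<beta>) \<beta> A x" .
qed

lemma fb_H: "f_beta k n X A \<beta> \<in> H" using fb_eq hfun_H[OF finA] by simp

lemma Pn_fb: "P_n n X (f_beta k n X A \<beta>) = 0"
proof -
  have "(\<Sum>j<n. f_beta k n X A \<beta> (X j)) = (\<Sum>j<n. \<Sum>i\<in>A. (k (X j) (X i) - kbar k n X (X i)) * \<beta> i)"
    unfolding f_beta_def ktilde_def by simp
  also have "\<dots> = (\<Sum>i\<in>A. \<Sum>j<n. (k (X j) (X i) - kbar k n X (X i)) * \<beta> i)"
    by (rule sum.swap)
  also have "\<dots> = (\<Sum>i\<in>A. 0)"
  proof (rule sum.cong)
    fix i assume "i \<in> A"
    have "(\<Sum>j<n. (k (X j) (X i) - kbar k n X (X i)) * \<beta> i)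
        = ((\<Sum>j<n. k (X j) (X i)) - real n * kbar k n X (X i)) * \<beta> i"
      by (subst sum_distrib_right[symmetric]) (simp add: sum_subtractf)
    also have "real n * kbar k n X (X i) = (\<Sum>j<n. k (X j) (X i))"
      using npos by (simp add: kbar_def)
    finally show "(\<Sum>j<n. (k (X j) (X i) - kbar k n X (X i)) * \<beta> i) = 0" by simp
  qed simp
  finally show ?thesis by (simp add: P_n_def)
qed

lemma g_eq: "ell_pen ip \<gamma> n X T I (f_beta k n X A \<beta>)
   = ell_n n X T I (f_beta k n X A \<beta>) + \<gamma> * ip (f_beta k n X A \<beta>) (f_beta k n X A \<beta>)"
  unfolding ell_pen_def hnorm2_def Pn_fb by simp

lemma indep_fun:
  assumes h0: "hfun k X c0 c A = (\<lambda>_. 0)"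
  shows "c0 = 0 \<and> (\<forall>i\<in>A. c i = 0)"
proof -
  have "\<forall>j\<le>n. c0 * v0 ip j + (\<Sum>i\<in>A. c i * wvec k X i j) = 0"
  proof (intro allI impI)
    fix j assume j: "j \<le> n"
    show "c0 * v0 ip j + (\<Sum>i\<in>A. c i * wvec k X i j) = 0"
    proof (cases "j = 0")
      case True
      have "ip (\<lambda>_. 1) (hfun k X c0 c A) = 0" using h0 ip_zero_r one_H by simp
      then show ?thesis using True ip_one_hfun[OF finA, of X c0 c]
        by (simp add: v0_def wvec_def hnorm2_def)
    next
      case False
      have "hfun k X c0 c A (X (j - 1)) = 0" using h0 by simp
      then have "c0 + (\<Sum>i\<in>A. c i * k (X (j - 1)) (X i)) = 0" by (simp add: hfun_def)
      moreover have "(\<Sum>i\<in>A. c i * k (X (j - 1)) (X i)) = (\<Sum>i\<in>A. c i * wvec k X i j)"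
        using False ksym by (simp add: wvec_def)
      ultimately show ?thesis using False by (simp add: v0_def)
    qed
  qed
  then show ?thesis using Aind unfolding indep_family_def by blast
qed

lemma pdB: "\<exists>l>0. \<forall>c\<in>coords (insert 0 (Suc ` A)).
   ip (hfun k X (c 0) (\<lambda>i. c (Suc i)) A) (hfun k X (c 0) (\<lambda>i. c (Suc i)) A)
     \<ge> l * (\<Sum>j\<in>insert 0 (Suc ` A). (c j)\<^sup>2)"
proof (rule quad_pd)
  show "finite (insert 0 (Suc ` A))" using finA by simp
  have eq: "(\<lambda>c. ip (hfun k X (c 0) (\<lambda>i. c (Suc i)) A) (hfun k X (c 0) (\<lambda>i. c (Suc i)) A))
     = (\<lambda>c. Pq k X (ip (\<lambda>_. 1) (\<lambda>_. 1)) (c 0) (\<lambda>i. c (Suc i)) A)"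
    using hfun_quad[OF finA] by simp
  show "continuous_on (coords (insert 0 (Suc ` A)))
     (\<lambda>c. ip (hfun k X (c 0) (\<lambda>i. c (Suc i)) A) (hfun k X (c 0) (\<lambda>i. c (Suc i)) A))"
    unfolding eq Pq_def by (intro continuous_intros)
  show "\<forall>c\<in>coords (insert 0 (Suc ` A)). \<forall>s.
     ip (hfun k X (s * c 0) (\<lambda>i. s * c (Suc i)) A) (hfun k X (s * c 0) (\<lambda>i. s * c (Suc i)) A)
     = s\<^sup>2 * ip (hfun k X (c 0) (\<lambda>i. c (Suc i)) A) (hfun k X (c 0) (\<lambda>i. c (Suc i)) A)"
  proof (intro ballI allI)
    fix c :: "nat \<Rightarrow> real" and s :: real
    have "hfun k X (s * c 0) (\<lambda>i. s * c (Suc i)) A = (\<lambda>x. s * hfun k X (c 0) (\<lambda>i. c (Suc i)) A x)"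
      by (simp add: hfun_def[abs_def] sum_distrib_left algebra_simps)
    then show "ip (hfun k X (s * c 0) (\<lambda>i. s * c (Suc i)) A) (hfun k X (s * c 0) (\<lambda>i. s * c (Suc i)) A)
     = s\<^sup>2 * ip (hfun k X (c 0) (\<lambda>i. c (Suc i)) A) (hfun k X (c 0) (\<lambda>i. c (Suc i)) A)"
      using ip_scale[OF hfun_H[OF finA]] by simp
  qed
  show "\<forall>c\<in>coords (insert 0 (Suc ` A)). (\<exists>i\<in>insert 0 (Suc ` A). c i \<noteq> 0) \<longrightarrow>
     0 < ip (hfun k X (c 0) (\<lambda>i. c (Suc i)) A) (hfun k X (c 0) (\<lambda>i. c (Suc i)) A)"
  proof (intro ballI impI)
    fix c assume c: "c \<in> coords (insert 0 (Suc ` A))" and ex: "\<exists>i\<in>insert 0 (Suc ` A). c i \<noteq> 0"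
    have hH: "hfun k X (c 0) (\<lambda>i. c (Suc i)) A \<in> H" using hfun_H[OF finA] .
    show "0 < ip (hfun k X (c 0) (\<lambda>i. c (Suc i)) A) (hfun k X (c 0) (\<lambda>i. c (Suc i)) A)"
    proof (rule ccontr)
      assume "\<not> ?thesis"
      then have "ip (hfun k X (c 0) (\<lambda>i. c (Suc i)) A) (hfun k X (c 0) (\<lambda>i. c (Suc i)) A) = 0"
        using ip_pos[OF hH] by linarith
      then have "hfun k X (c 0) (\<lambda>i. c (Suc i)) A = (\<lambda>_. 0)" using ip_def0[OF hH] by blast
      then have "c 0 = 0 \<and> (\<forall>i\<in>A. c (Suc i) = 0)" using indep_fun by blast
      then show False using ex by auto
    qed
  qed
qed

lemma pdA: "\<exists>l>0. \<forall>\<beta>. ip (f_beta k n X A \<beta>) (f_beta k n X A \<beta>) \<ge> l * (\<Sum>i\<in>A. (\<beta> i)\<^sup>2)"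
proof -
  obtain l where l: "l > 0" and lB: "\<forall>c\<in>coords (insert 0 (Suc ` A)).
   ip (hfun k X (c 0) (\<lambda>i. c (Suc i)) A) (hfun k X (c 0) (\<lambda>i. c (Suc i)) A)
     \<ge> l * (\<Sum>j\<in>insert 0 (Suc ` A). (c j)\<^sup>2)" using pdB by blast
  show ?thesis
  proof (intro exI[of _ l] conjI allI l)
    fix \<beta> :: "nat \<Rightarrow> real"
    define c where "c = (\<lambda>j. if j = 0 then c0b k n X A \<beta> else if j - 1 \<in> A then \<beta> (j - 1) else 0)"
    have cB: "c \<in> coords (insert 0 (Suc ` A))"
      unfolding coords_def
    proof (intro CollectI allI impI)
      fix j assume "j \<notin> insert 0 (Suc ` A)" then show "c j = 0" by (cases j) (auto simp: c_def)
    qed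
    have "hfun k X (c 0) (\<lambda>i. c (Suc i)) A = hfun k X (c0b k n X A \<beta>) \<beta> A"
      unfolding hfun_def[abs_def] c_def by (intro ext arg_cong2[where f="(+)"] sum.cong) auto
    then have e: "hfun k X (c 0) (\<lambda>i. c (Suc i)) A = f_beta k n X A \<beta>" using fb_eq by simp
    have "(\<Sum>j\<in>insert 0 (Suc ` A). (c j)\<^sup>2) = (c 0)\<^sup>2 + (\<Sum>i\<in>A. (c (Suc i))\<^sup>2)"
      using sum_B[OF finA] .
    also have "(\<Sum>i\<in>A. (c (Suc i))\<^sup>2) = (\<Sum>i\<in>A. (\<beta> i)\<^sup>2)"
      by (rule sum.cong) (auto simp: c_def)
    finally have "(\<Sum>j\<in>insert 0 (Suc ` A). (c j)\<^sup>2) \<ge> (\<Sum>i\<in>A. (\<beta> i)\<^sup>2)" by simp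
    then have "l * (\<Sum>j\<in>insert 0 (Suc ` A). (c j)\<^sup>2) \<ge> l * (\<Sum>i\<in>A. (\<beta> i)\<^sup>2)"
      using l by (simp add: mult_left_mono)
    then show "ip (f_beta k n X A \<beta>) (f_beta k n X A \<beta>) \<ge> l * (\<Sum>i\<in>A. (\<beta> i)\<^sup>2)"
      using lB cB e by force
  qed
qed

end



lemma aux_sc:
  fixes E E1 E2 Q Q1 Q2 D l S \<gamma> t :: real
  assumes "E \<le> t * E1 + (1 - t) * E2" "Q = t * Q1 + (1 - t) * Q2 - t * (1 - t) * D"
    "D \<ge> l * S" "\<gamma> > 0" "0 \<le> t" "t \<le> 1"
  shows "E + \<gamma> * Q \<le> t * (E1 + \<gamma> * Q1) + (1 - t) * (E2 + \<gamma> * Q2) - (2 * \<gamma> * l) / 2 * t * (1 - t) * S"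
proof -
  have "\<gamma> * t * (1 - t) \<ge> 0" using assms by simp
  then have "(\<gamma> * t * (1 - t)) * D \<ge> (\<gamma> * t * (1 - t)) * (l * S)" using mult_left_mono[OF assms(3)] by blast
  moreover have "\<gamma> * Q = t * (\<gamma> * Q1) + (1 - t) * (\<gamma> * Q2) - (\<gamma> * t * (1 - t)) * D"
    unfolding assms(2) by (simp add: algebra_simps)
  moreover have "(2 * \<gamma> * l) / 2 * t * (1 - t) * S = (\<gamma> * t * (1 - t)) * (l * S)" by (simp add: algebra_simps)
  moreover have "t * (E1 + \<gamma> * Q1) = t * E1 + t * (\<gamma> * Q1)" by (simp add: algebra_simps)
  moreover have "(1 - t) * (E2 + \<gamma> * Q2) = (1 - t) * E2 + (1 - t) * (\<gamma> * Q2)" by (simp add: algebra_simps)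
  ultimately show ?thesis using assms(1) by linarith
qed

context setting
begin

lemma fb_comb: "f_beta k n X A (\<lambda>i. t * \<beta> i + (1 - t) * \<beta>' i)
   = (\<lambda>x. t * f_beta k n X A \<beta> x + (1 - t) * f_beta k n X A \<beta>' x)"
proof
  fix x
  have "f_beta k n X A (\<lambda>i. t * \<beta> i + (1 - t) * \<beta>' i) x
     = (\<Sum>i\<in>A. t * (ktilde k n X x (X i) * \<beta> i) + (1 - t) * (ktilde k n X x (X i) * \<beta>' i))"
    unfolding f_beta_def by (rule sum.cong) (simp_all add: algebra_simps)
  also have "\<dots> = t * f_beta k n X A \<beta> x + (1 - t) * f_beta k n X A \<beta>' x"
    unfolding f_beta_def by (simp add: sum.distrib sum_distrib_left)
  finally show "f_beta k n X A (\<lambda>i. t * \<beta> i + (1 - t) * \<beta>' i) x = t * f_beta k n X A \<beta> x + (1 - t) * f_beta k n X A \<beta>' x" .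
qed

lemma fb_diff: "(\<lambda>x. f_beta k n X A \<beta> x - f_beta k n X A \<beta>' x) = f_beta k n X A (\<lambda>i. \<beta> i - \<beta>' i)"
  unfolding f_beta_def[abs_def] by (simp add: sum_subtractf algebra_simps)

lemma sc: "strongly_convex_coords A (\<lambda>\<beta>. ell_pen ip \<gamma> n X T I (f_beta k n X A \<beta>))"
proof -
  obtain l where l: "l > 0" and lA: "\<forall>\<beta>. ip (f_beta k n X A \<beta>) (f_beta k n X A \<beta>) \<ge> l * (\<Sum>i\<in>A. (\<beta> i)\<^sup>2)"
    using pdA by blast
  show ?thesis unfolding strongly_convex_coords_def
  proof (intro exI[of _ "2 * \<gamma> * l"] conjI ballI allI impI)
    show "2 * \<gamma> * l > 0" using l gpos by simp
    fix \<beta> \<beta>' :: "nat \<Rightarrow> real" and t :: real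
    assume t: "0 \<le> t \<and> t \<le> 1"
    define F where "F = f_beta k n X A \<beta>"
    define G where "G = f_beta k n X A \<beta>'"
    have FH: "F \<in> H" and GH: "G \<in> H" using fb_H by (auto simp: F_def G_def)
    have comb: "f_beta k n X A (\<lambda>i. t * \<beta> i + (1 - t) * \<beta>' i) = (\<lambda>x. t * F x + (1 - t) * G x)"
      unfolding F_def G_def by (rule fb_comb)
    have E: "ell_n n X T I (\<lambda>x. t * F x + (1 - t) * G x) \<le> t * ell_n n X T I F + (1 - t) * ell_n n X T I G"
      using ell_convex t npos by blast
    have Q: "ip (\<lambda>x. t * F x + (1 - t) * G x) (\<lambda>x. t * F x + (1 - t) * G x)
       = t * ip F F + (1 - t) * ip G G - t * (1 - t) * ip (\<lambda>x. F x - G x) (\<lambda>x. F x - G x)"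
      unfolding sq_expand[OF FH GH, of t "1 - t"] sq_expand_diff[OF FH GH]
      by (simp add: algebra_simps power2_eq_square)
    have D: "ip (\<lambda>x. F x - G x) (\<lambda>x. F x - G x) \<ge> l * (\<Sum>i\<in>A. (\<beta> i - \<beta>' i)\<^sup>2)"
      using lA fb_diff unfolding F_def G_def by metis
    show "ell_pen ip \<gamma> n X T I (f_beta k n X A (\<lambda>i. t * \<beta> i + (1 - t) * \<beta>' i))
       \<le> t * ell_pen ip \<gamma> n X T I (f_beta k n X A \<beta>) + (1 - t) * ell_pen ip \<gamma> n X T I (f_beta k n X A \<beta>')
          - 2 * \<gamma> * l / 2 * t * (1 - t) * (\<Sum>i\<in>A. (\<beta> i - \<beta>' i)\<^sup>2)"
      unfolding g_eq unfolding comb using aux_sc[OF E Q D gpos] t unfolding F_def G_def by simp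
  qed
qed

lemma g_cont: "continuous_on S (\<lambda>\<beta>. ell_pen ip \<gamma> n X T I (f_beta k n X A \<beta>))"
proof -
  have cS: "continuous_on S (\<lambda>\<beta>. S_n n X T (f_beta k n X A \<beta>) t)" for t
    unfolding S_n_def f_beta_def by (intro continuous_intros)
  have cL: "continuous_on S (\<lambda>\<beta>. ln (S_n n X T (f_beta k n X A \<beta>) (T i)))" if "i < n" for i
  proof (rule continuous_on_ln[OF cS])
    show "\<forall>\<beta>\<in>S. S_n n X T (f_beta k n X A \<beta>) (T i) \<noteq> 0"
    proof
      fix \<beta> assume "\<beta> \<in> S"
      have "S_n n X T (f_beta k n X A \<beta>) (T i) > 0" by (rule S_pos[OF that])
      then show "S_n n X T (f_beta k n X A \<beta>) (T i) \<noteq> 0" by simp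
    qed
  qed
  have c1: "continuous_on S (\<lambda>\<beta>. ell_n n X T I (f_beta k n X A \<beta>))"
    unfolding ell_n_def
    by (intro continuous_intros continuous_on_sum ballI continuous_on_mult_left cL; simp add: f_beta_def; intro continuous_intros)
  have eq: "(\<lambda>\<beta>. ip (f_beta k n X A \<beta>) (f_beta k n X A \<beta>))
      = (\<lambda>\<beta>. Pq k X (ip (\<lambda>_. 1) (\<lambda>_. 1)) (c0b k n X A \<beta>) \<beta> A)"
    using hfun_quad[OF finA] fb_eq by simp
  have c2: "continuous_on S (\<lambda>\<beta>. ip (f_beta k n X A \<beta>) (f_beta k n X A \<beta>))"
    unfolding eq Pq_def c0b_def by (intro continuous_intros)
  show ?thesis unfolding g_eq by (intro continuous_intros c1 c2)
qed

lemma exists_min: "\<exists>\<beta>\<in>coords A. \<forall>\<beta>'\<in>coords A.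
   ell_pen ip \<gamma> n X T I (f_beta k n X A \<beta>) \<le> ell_pen ip \<gamma> n X T I (f_beta k n X A \<beta>')"
proof -
  obtain l where l: "l > 0" and lA: "\<forall>\<beta>. ip (f_beta k n X A \<beta>) (f_beta k n X A \<beta>) \<ge> l * (\<Sum>i\<in>A. (\<beta> i)\<^sup>2)"
    using pdA by blast
  show ?thesis
  proof (rule coercive_min[OF finA g_cont])
    show "\<gamma> * l > 0" using l gpos by simp
    show "\<forall>\<beta>\<in>coords A. ell_pen ip \<gamma> n X T I (f_beta k n X A \<beta>) \<ge> - ln (real n) + \<gamma> * l * (\<Sum>i\<in>A. (\<beta> i)\<^sup>2)"
    proof
      fix \<beta> :: "nat \<Rightarrow> real"
      have a: "ell_n n X T I (f_beta k n X A \<beta>) \<ge> - ln (real n)" using ell_lower npos by blast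
      have "\<gamma> * ip (f_beta k n X A \<beta>) (f_beta k n X A \<beta>) \<ge> \<gamma> * (l * (\<Sum>i\<in>A. (\<beta> i)\<^sup>2))"
        using lA gpos by (simp add: mult_left_mono)
      then show "ell_pen ip \<gamma> n X T I (f_beta k n X A \<beta>) \<ge> - ln (real n) + \<gamma> * l * (\<Sum>i\<in>A. (\<beta> i)\<^sup>2)"
        unfolding g_eq using a by (simp add: mult.assoc)
    qed
  qed
qed

lemma uniq_min:
  assumes b1: "\<beta>1 \<in> coords A" "\<forall>\<beta>'\<in>coords A. ell_pen ip \<gamma> n X T I (f_beta k n X A \<beta>1) \<le> ell_pen ip \<gamma> n X T I (f_beta k n X A \<beta>')"
    and b2: "\<beta>2 \<in> coords A" "\<forall>\<beta>'\<in>coords A. ell_pen ip \<gamma> n X T I (f_beta k n X A \<beta>2) \<le> ell_pen ip \<gamma> n X T I (f_beta k n X A \<beta>')"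
  shows "\<beta>1 = \<beta>2"
proof -
  let ?g = "\<lambda>\<beta>. ell_pen ip \<gamma> n X T I (f_beta k n X A \<beta>)"
  obtain \<mu> where mu: "\<mu> > 0" and scv: "\<forall>\<beta>\<in>coords A. \<forall>\<beta>'\<in>coords A. \<forall>t::real. 0 \<le> t \<and> t \<le> 1 \<longrightarrow>
        ?g (\<lambda>i. t * \<beta> i + (1 - t) * \<beta>' i)
          \<le> t * ?g \<beta> + (1 - t) * ?g \<beta>' - \<mu> / 2 * t * (1 - t) * (\<Sum>i\<in>A. (\<beta> i - \<beta>' i)\<^sup>2)"
    using sc unfolding strongly_convex_coords_def by blast
  define m where "m = (\<lambda>i. (1/2) * \<beta>1 i + (1 - 1/2) * \<beta>2 i)"
  have mA: "m \<in> coords A" using b1(1) b2(1) by (auto simp: coords_def m_def)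
  have "?g m \<le> (1/2) * ?g \<beta>1 + (1 - 1/2) * ?g \<beta>2 - \<mu> / 2 * (1/2) * (1 - 1/2) * (\<Sum>i\<in>A. (\<beta>1 i - \<beta>2 i)\<^sup>2)"
    using scv[rule_format, OF b1(1) b2(1), of "1/2"] unfolding m_def by simp
  moreover have "?g \<beta>1 \<le> ?g m" "?g \<beta>2 \<le> ?g m" using b1(2) b2(2) mA by auto
  ultimately have "\<mu> / 8 * (\<Sum>i\<in>A. (\<beta>1 i - \<beta>2 i)\<^sup>2) \<le> 0" by simp
  then have "(\<Sum>i\<in>A. (\<beta>1 i - \<beta>2 i)\<^sup>2) \<le> 0" using mu by (simp add: mult_le_0_iff)
  then have "(\<Sum>i\<in>A. (\<beta>1 i - \<beta>2 i)\<^sup>2) = 0" by (simp add: antisym sum_nonneg)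
  then have "\<forall>i\<in>A. (\<beta>1 i - \<beta>2 i)\<^sup>2 = 0" using finA by (simp add: sum_nonneg_eq_0_iff)
  then show ?thesis using b1(1) b2(1) by (auto simp: coords_def fun_eq_iff)
qed

end



lemma quad_zero:
  fixes a W :: real
  assumes all: "\<forall>t. 0 \<le> - 2 * t * a + t\<^sup>2 * W" and W: "W \<ge> 0"
  shows "a = 0"
proof -
  define s where "s = W + 1"
  have s: "s > 0" using W by (simp add: s_def)
  have "0 \<le> - 2 * (a / s) * a + (a / s)\<^sup>2 * W" using all by blast
  then have "0 \<le> s\<^sup>2 * (- 2 * (a / s) * a + (a / s)\<^sup>2 * W)" using s by simp
  also have "s\<^sup>2 * (- 2 * (a / s) * a + (a / s)\<^sup>2 * W) = a\<^sup>2 * (W - 2 * s)"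
    using s by (simp add: field_simps power2_eq_square)
  also have "\<dots> = - (a\<^sup>2 * (W + 2))" by (simp add: s_def algebra_simps)
  finally have "a\<^sup>2 * (W + 2) \<le> 0" by simp
  moreover have "W + 2 > 0" using W by simp
  ultimately have "a\<^sup>2 \<le> 0" by (simp add: mult_le_0_iff)
  then show ?thesis by simp
qed

lemma hfun_upd: "finite A \<Longrightarrow> i \<in> A \<Longrightarrow>
  hfun k X c0 (c(i := c i + t)) A x = hfun k X c0 c A x + t * k x (X i)"
proof -
  assume A: "finite A" and i: "i \<in> A"
  have "(\<Sum>j\<in>A. (c(i := c i + t)) j * k x (X j)) = (\<Sum>j\<in>A. c j * k x (X j) + (if j = i then t * k x (X j) else 0))"
    by (rule sum.cong) (auto simp: algebra_simps)
  also have "\<dots> = (\<Sum>j\<in>A. c j * k x (X j)) + t * k x (X i)"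
    using A i by (simp add: sum.distrib)
  finally show ?thesis by (simp add: hfun_def)
qed

context setting
begin

lemma orth_from_min:
  assumes rH: "r \<in> H" and wH: "w \<in> H" and m: "\<forall>t. ip r r \<le> ip (\<lambda>x. r x - t * w x) (\<lambda>x. r x - t * w x)"
  shows "ip r w = 0"
proof (rule quad_zero)
  show "ip w w \<ge> 0" using ip_pos[OF wH] .
  show "\<forall>t. 0 \<le> - 2 * t * ip r w + t\<^sup>2 * ip w w"
  proof
    fix t
    have "ip (\<lambda>x. r x - t * w x) (\<lambda>x. r x - t * w x) = ip r r - 2 * t * ip r w + t\<^sup>2 * ip w w"
      using sq_expand[OF rH wH, of 1 "-t"] by simp
    then show "0 \<le> - 2 * t * ip r w + t\<^sup>2 * ip w w" using m[rule_format, of t] by linarith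
  qed
qed

lemma proj: assumes fH: "f \<in> H"
  shows "\<exists>c0 c. ip (\<lambda>x. f x - hfun k X c0 c A x) (\<lambda>_. 1) = 0
     \<and> (\<forall>i\<in>A. f (X i) - hfun k X c0 c A (X i) = 0)"
proof -
  let ?B = "insert 0 (Suc ` A)"
  let ?h = "\<lambda>c. hfun k X (c 0) (\<lambda>i. c (Suc i)) A"
  let ?\<Phi> = "\<lambda>c. ip (\<lambda>x. f x - ?h c x) (\<lambda>x. f x - ?h c x)"
  obtain l where l: "l > 0" and lB: "\<forall>c\<in>coords ?B. ip (?h c) (?h c) \<ge> l * (\<Sum>j\<in>?B. (c j)\<^sup>2)"
    using pdB by blast
  have hH: "?h c \<in> H" for c using hfun_H[OF finA] .
  have Phi_eq: "?\<Phi> c = ip f f - 2 * ((c 0) * ip f (\<lambda>_. 1) + (\<Sum>i\<in>A. c (Suc i) * f (X i)))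
       + Pq k X (ip (\<lambda>_. 1) (\<lambda>_. 1)) (c 0) (\<lambda>i. c (Suc i)) A" for c
    using sq_expand_diff[OF fH hH] ip_hfun[OF finA fH] hfun_quad[OF finA] by simp
  have cont: "continuous_on (coords ?B) ?\<Phi>"
    unfolding Phi_eq Pq_def by (intro continuous_intros)
  have bd: "\<forall>c\<in>coords ?B. ?\<Phi> c \<ge> - ip f f + (l / 2) * (\<Sum>j\<in>?B. (c j)\<^sup>2)"
  proof
    fix c assume c: "c \<in> coords ?B"
    have "ip (\<lambda>x. 2 * f x + (-1) * ?h c x) (\<lambda>x. 2 * f x + (-1) * ?h c x) \<ge> 0"
      using ip_pos lin_H[OF fH hH] by blast
    then have "0 \<le> 4 * ip f f - 4 * ip f (?h c) + ip (?h c) (?h c)"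
      unfolding sq_expand[OF fH hH] by (simp add: power2_eq_square)
    moreover have "?\<Phi> c = ip f f - 2 * ip f (?h c) + ip (?h c) (?h c)" using sq_expand_diff[OF fH hH] .
    moreover have "ip (?h c) (?h c) \<ge> l * (\<Sum>j\<in>?B. (c j)\<^sup>2)" using lB c by blast
    ultimately show "?\<Phi> c \<ge> - ip f f + (l / 2) * (\<Sum>j\<in>?B. (c j)\<^sup>2)" by linarith
  qed
  obtain c where cB: "c \<in> coords ?B" and cmin: "\<forall>c'\<in>coords ?B. ?\<Phi> c \<le> ?\<Phi> c'"
    using coercive_min[OF _ cont _ bd] finA l by auto
  define r where "r = (\<lambda>x. f x - ?h c x)"
  have rH: "r \<in> H" using lin_H[OF fH hH, of 1 "-1"] by (simp add: r_def)
  have o1: "ip r (\<lambda>_. 1) = 0"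
  proof (rule orth_from_min[OF rH one_H])
    show "\<forall>t. ip r r \<le> ip (\<lambda>x. r x - t * 1) (\<lambda>x. r x - t * 1)"
    proof
      fix t
      have "c(0 := c 0 + t) \<in> coords ?B" using cB by (auto simp: coords_def)
      then have "?\<Phi> c \<le> ?\<Phi> (c(0 := c 0 + t))" using cmin by blast
      moreover have "?h (c(0 := c 0 + t)) = (\<lambda>x. ?h c x + t)" by (rule ext) (simp add: hfun_def)
      ultimately show "ip r r \<le> ip (\<lambda>x. r x - t * 1) (\<lambda>x. r x - t * 1)"
        by (simp add: r_def algebra_simps)
    qed
  qed
  have o2: "r (X i) = 0" if i: "i \<in> A" for i
  proof -
    have "ip r (\<lambda>x. k x (X i)) = 0"
    proof (rule orth_from_min[OF rH K_H])
      show "\<forall>t. ip r r \<le> ip (\<lambda>x. r x - t * k x (X i)) (\<lambda>x. r x - t * k x (X i))"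
      proof
        fix t
        have "c(Suc i := c (Suc i) + t) \<in> coords ?B" using cB i by (auto simp: coords_def)
        then have "?\<Phi> c \<le> ?\<Phi> (c(Suc i := c (Suc i) + t))" using cmin by blast
        moreover have "?h (c(Suc i := c (Suc i) + t)) = (\<lambda>x. ?h c x + t * k x (X i))"
        proof
          fix x
          have "(\<lambda>j. (c(Suc i := c (Suc i) + t)) (Suc j)) = (\<lambda>j. c (Suc j))(i := c (Suc i) + t)"
            by auto
          then show "?h (c(Suc i := c (Suc i) + t)) x = ?h c x + t * k x (X i)"
            using hfun_upd[OF finA i, of k X "c 0" "\<lambda>j. c (Suc j)" t x] by simp
        qed
        ultimately show "ip r r \<le> ip (\<lambda>x. r x - t * k x (X i)) (\<lambda>x. r x - t * k x (X i))"
          by (simp add: r_def algebra_simps)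
      qed
    qed
    then show ?thesis using repr[OF rH] by simp
  qed
  show ?thesis using o1 o2 unfolding r_def by blast
qed

end



context setting
begin

lemma rep:
  assumes rH: "r \<in> H" and o1: "ip r (\<lambda>_. 1) = 0" and o2: "\<forall>i\<in>A. r (X i) = 0"
  shows "\<forall>j<n. r (X j) = 0"
proof (intro allI impI)
  fix j assume jn: "j < n"
  show "r (X j) = 0"
  proof (cases "j \<in> A")
    case True then show ?thesis using o2 by blast
  next
    case False
    let ?B' = "insert j A"
    have "A \<subset> ?B' \<and> ?B' \<subseteq> {..<n}" using False jn Asub by auto
    then have "\<not> indep_family ip k n X ?B'" using Amax by blast
    then obtain d0 d where rel: "\<forall>l\<le>n. d0 * v0 ip l + (\<Sum>i\<in>?B'. d i * wvec k X i l) = 0"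
      and nz: "\<not> (d0 = 0 \<and> (\<forall>i\<in>?B'. d i = 0))"
      unfolding indep_family_def by blast
    have finB': "finite ?B'" using finA by simp
    have sumB': "(\<Sum>i\<in>?B'. F i) = F j + (\<Sum>i\<in>A. F i)" for F :: "nat \<Rightarrow> real"
      using False finA by simp
    have dj: "d j \<noteq> 0"
    proof
      assume dj0: "d j = 0"
      have "\<forall>l\<le>n. d0 * v0 ip l + (\<Sum>i\<in>A. d i * wvec k X i l) = 0"
        using rel dj0 sumB' by simp
      then have "d0 = 0 \<and> (\<forall>i\<in>A. d i = 0)" using Aind unfolding indep_family_def by blast
      then show False using nz dj0 by auto
    qed
    define hh where "hh = hfun k X d0 d ?B'"
    have hhH: "hh \<in> H" unfolding hh_def using hfun_H[OF finB'] .
    have row0: "d0 * ip (\<lambda>_. 1) (\<lambda>_. 1) + (\<Sum>i\<in>?B'. d i) = 0"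
      using rel[rule_format, of 0] by (simp add: v0_def wvec_def hnorm2_def)
    have ip1: "ip hh (\<lambda>_. 1) = 0"
      using ip_sym[OF hhH one_H] ip_one_hfun[OF finB', of X d0 d] row0 unfolding hh_def by simp
    have hhX: "hh (X i) = 0" if i: "i \<in> ?B'" for i
    proof -
      have "i < n" using i jn Asub by auto
      then have "d0 * v0 ip (Suc i) + (\<Sum>m\<in>?B'. d m * wvec k X m (Suc i)) = 0"
        using rel by simp
      moreover have "(\<Sum>m\<in>?B'. d m * wvec k X m (Suc i)) = (\<Sum>m\<in>?B'. d m * k (X i) (X m))"
        using ksym by (simp add: wvec_def)
      ultimately show ?thesis by (simp add: hh_def hfun_def v0_def)
    qed
    have "ip hh hh = d0 * ip hh (\<lambda>_. 1) + (\<Sum>i\<in>?B'. d i * hh (X i))"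
      unfolding hh_def[symmetric] using ip_hfun[OF finB' hhH, of X d0 d] unfolding hh_def by simp
    also have "\<dots> = 0" using ip1 hhX by simp
    finally have "hh = (\<lambda>_. 0)" using ip_def0[OF hhH] by blast
    then have "ip r hh = 0" using ip_zero_r[OF rH] by simp
    moreover have "ip r hh = d0 * ip r (\<lambda>_. 1) + (\<Sum>i\<in>?B'. d i * r (X i))"
      unfolding hh_def using ip_hfun[OF finB' rH] .
    moreover have "(\<Sum>i\<in>?B'. d i * r (X i)) = d j * r (X j)"
      using sumB' o2 by simp
    ultimately have "d j * r (X j) = 0" using o1 by simp
    then show ?thesis using dj by simp
  qed
qed

lemma main_H:
  assumes bA: "\<beta> \<in> coords A"
    and bmin: "\<forall>\<beta>'\<in>coords A. ell_pen ip \<gamma> n X T I (f_beta k n X A \<beta>) \<le> ell_pen ip \<gamma> n X T I (f_beta k n X A \<beta>')"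
    and fH: "f \<in> H"
  shows "ell_pen ip \<gamma> n X T I (f_beta k n X A \<beta>) \<le> ell_pen ip \<gamma> n X T I f
    \<and> ((\<forall>g\<in>H. ell_pen ip \<gamma> n X T I f \<le> ell_pen ip \<gamma> n X T I g) \<longrightarrow> f = f_beta k n X A \<beta>)"
proof -
  let ?g = "\<lambda>\<beta>. ell_pen ip \<gamma> n X T I (f_beta k n X A \<beta>)"
  obtain c0 c where o1: "ip (\<lambda>x. f x - hfun k X c0 c A x) (\<lambda>_. 1) = 0"
     and o2: "\<forall>i\<in>A. f (X i) - hfun k X c0 c A (X i) = 0"
    using proj[OF fH] by blast
  define r where "r = (\<lambda>x. f x - hfun k X c0 c A x)"
  have rH: "r \<in> H" using lin_H[OF fH hfun_H[OF finA], of 1 "-1"] by (simp add: r_def)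
  have rX: "\<forall>j<n. r (X j) = 0" using rep[OF rH] o1 o2 unfolding r_def by blast
  define \<beta>' where "\<beta>' = (\<lambda>i. if i \<in> A then c i else 0)"
  have b'A: "\<beta>' \<in> coords A" by (simp add: coords_def \<beta>'_def)
  define a where "a = c0 - c0b k n X A \<beta>'"
  define F where "F = f_beta k n X A \<beta>'"
  have FH: "F \<in> H" using fb_H by (simp add: F_def)
  have hF: "hfun k X c0 c A x = a + F x" for x
  proof -
    have "(\<Sum>i\<in>A. c i * k x (X i)) = (\<Sum>i\<in>A. \<beta>' i * k x (X i))" by (rule sum.cong) (auto simp: \<beta>'_def)
    then show ?thesis unfolding F_def fb_eq a_def by (simp add: hfun_def)
  qed
  have fdec: "f x = a + F x + r x" for x using hF by (simp add: r_def)
  have fX: "\<forall>j<n. f (X j) = a + F (X j)" using fdec rX by simp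
  have ell: "ell_n n X T I f = ell_n n X T I F"
    using ell_cong[where f=f and g="\<lambda>x. a + F x", OF fX] ell_shift[OF npos] by simp
  have Pf: "P_n n X f = a"
  proof -
    have "P_n n X f = P_n n X (\<lambda>x. a + F x)" using P_cong[where f=f and g="\<lambda>x. a + F x", OF fX] .
    also have "\<dots> = a + P_n n X F" using npos by (simp add: P_n_def sum.distrib algebra_simps)
    also have "P_n n X F = 0" unfolding F_def by (rule Pn_fb)
    finally show ?thesis by simp
  qed
  have ipFr: "ip F r = 0"
  proof -
    have "ip F r = ip r F" using ip_sym[OF FH rH] .
    also have "\<dots> = c0b k n X A \<beta>' * ip r (\<lambda>_. 1) + (\<Sum>i\<in>A. \<beta>' i * r (X i))"
      unfolding F_def fb_eq using ip_hfun[OF finA rH] .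
    also have "\<dots> = 0" using o1 rX Asub unfolding r_def[symmetric] by (auto intro!: sum.neutral)
    finally show ?thesis .
  qed
  have "(\<lambda>x. f x - P_n n X f * 1) = (\<lambda>x. F x + r x)" using fdec Pf by auto
  then have hn: "hnorm2 ip (\<lambda>x. f x - P_n n X f * 1) = ip F F + ip r r"
    unfolding hnorm2_def using sq_expand_sum[OF FH rH] ipFr by simp
  have decomp: "ell_pen ip \<gamma> n X T I f = ?g \<beta>' + \<gamma> * ip r r + \<gamma> * a\<^sup>2"
  proof -
    have e1: "ell_pen ip \<gamma> n X T I f = ell_n n X T I f + \<gamma> * hnorm2 ip (\<lambda>x. f x - P_n n X f * 1) + \<gamma> * (P_n n X f)\<^sup>2"
      by (rule ell_pen_def)
    have e2: "?g \<beta>' = ell_n n X T I F + \<gamma> * ip F F" unfolding F_def by (rule g_eq)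
    show ?thesis unfolding e1 hn unfolding Pf ell e2 by (simp add: algebra_simps)
  qed
  have rr: "ip r r \<ge> 0" using ip_pos[OF rH] .
  have extra: "\<gamma> * ip r r + \<gamma> * a\<^sup>2 \<ge> 0" using gpos rr by simp
  have le1: "?g \<beta> \<le> ?g \<beta>'" using bmin b'A by blast
  show ?thesis
  proof
    show "?g \<beta> \<le> ell_pen ip \<gamma> n X T I f" using decomp le1 extra by linarith
    show "(\<forall>g\<in>H. ell_pen ip \<gamma> n X T I f \<le> ell_pen ip \<gamma> n X T I g) \<longrightarrow> f = f_beta k n X A \<beta>"
    proof
      assume fmin: "\<forall>g\<in>H. ell_pen ip \<gamma> n X T I f \<le> ell_pen ip \<gamma> n X T I g"
      then have "ell_pen ip \<gamma> n X T I f \<le> ?g \<beta>" using fb_H by blast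
      then have z: "\<gamma> * ip r r + \<gamma> * a\<^sup>2 \<le> 0" and gb: "?g \<beta>' \<le> ?g \<beta>"
        using decomp le1 extra by linarith+
      have "\<gamma> * ip r r \<ge> 0" "\<gamma> * a\<^sup>2 \<ge> 0" using gpos rr by simp_all
      then have "\<gamma> * ip r r = 0" "\<gamma> * a\<^sup>2 = 0" using z by linarith+
      then have r0: "ip r r = 0" and a0: "a = 0" using gpos by simp_all
      have "r = (\<lambda>_. 0)" using ip_def0[OF rH r0] .
      moreover have "\<beta>' = \<beta>"
      proof (rule uniq_min[OF b'A _ bA bmin])
        show "\<forall>\<beta>''\<in>coords A. ?g \<beta>' \<le> ?g \<beta>''" using gb bmin by force
      qed
      ultimately show "f = f_beta k n X A \<beta>" using fdec a0 unfolding F_def by auto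
    qed
  qed
qed

end


theorem proposition1:
  fixes k :: "'a::metric_space \<Rightarrow> 'a \<Rightarrow> real"
    and H :: "('a \<Rightarrow> real) set"
    and ip :: "('a \<Rightarrow> real) \<Rightarrow> ('a \<Rightarrow> real) \<Rightarrow> real"
    and \<delta> \<gamma> :: real
    and n :: nat
    and X :: "nat \<Rightarrow> 'a" and T :: "nat \<Rightarrow> real" and I :: "nat \<Rightarrow> nat"
    and A :: "nat set"
  assumes loc_compact: "locally_compact_space (euclidean :: 'a topology)"
    and sigma: "\<forall>U::'a set. open U \<longrightarrow> sigma_compact U"
    and k_cont: "continuous_on UNIV (\<lambda>p::'a \<times> 'a. k (fst p) (snd p))"
    and k_sym: "\<forall>x y. k x y = k y x"
    and k_psd: "psd_kernel k"
    and H_rkhs: "rkhs k H ip"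
    and \<delta>_pos: "\<delta> > 0"
    and k_\<delta>: "psd_kernel (\<lambda>x y. k x y - \<delta>)"
    and one_in_H: "(\<lambda>_. 1) \<in> H"
    and n_pos: "n > 0"
    and T_pos: "\<forall>i<n. T i > 0"
    and I_bin: "\<forall>i<n. I i \<in> {0, 1}"
    and \<gamma>_pos: "\<gamma> > 0"
    and A_sub: "A \<subseteq> {..<n}"
    and A_indep: "indep_family ip k n X A"
    and A_max: "\<forall>B. A \<subset> B \<and> B \<subseteq> {..<n} \<longrightarrow> \<not> indep_family ip k n X B"
  shows "strongly_convex_coords A (\<lambda>\<beta>. ell_pen ip \<gamma> n X T I (f_beta k n X A \<beta>))
    \<and> (\<exists>!\<beta>. \<beta> \<in> coords A \<and>
          (\<forall>\<beta>'\<in>coords A. ell_pen ip \<gamma> n X T I (f_beta k n X A \<beta>)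
                            \<le> ell_pen ip \<gamma> n X T I (f_beta k n X A \<beta>')))
    \<and> (\<forall>\<beta>. \<beta> \<in> coords A \<and>
          (\<forall>\<beta>'\<in>coords A. ell_pen ip \<gamma> n X T I (f_beta k n X A \<beta>)
                            \<le> ell_pen ip \<gamma> n X T I (f_beta k n X A \<beta>'))
        \<longrightarrow> f_beta k n X A \<beta> \<in> H
          \<and> (\<forall>f\<in>H. ell_pen ip \<gamma> n X T I (f_beta k n X A \<beta>) \<le> ell_pen ip \<gamma> n X T I f)
          \<and> (\<forall>f\<in>H. (\<forall>g\<in>H. ell_pen ip \<gamma> n X T I f \<le> ell_pen ip \<gamma> n X T I g)
                     \<longrightarrow> f = f_beta k n X A \<beta>))"
proof -
  interpret setting k H ip n X T I A \<gamma>
    by unfold_locales (use H_rkhs one_in_H k_sym n_pos \<gamma>_pos A_sub A_indep A_max in auto)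
  show ?thesis
  proof (intro conjI)
    show "strongly_convex_coords A (\<lambda>\<beta>. ell_pen ip \<gamma> n X T I (f_beta k n X A \<beta>))" by (rule sc)
    show "\<exists>!\<beta>. \<beta> \<in> coords A \<and>
          (\<forall>\<beta>'\<in>coords A. ell_pen ip \<gamma> n X T I (f_beta k n X A \<beta>)
                            \<le> ell_pen ip \<gamma> n X T I (f_beta k n X A \<beta>'))"
      using exists_min uniq_min by blast
    show "\<forall>\<beta>. \<beta> \<in> coords A \<and>
          (\<forall>\<beta>'\<in>coords A. ell_pen ip \<gamma> n X T I (f_beta k n X A \<beta>)
                            \<le> ell_pen ip \<gamma> n X T I (f_beta k n X A \<beta>'))
        \<longrightarrow> f_beta k n X A \<beta> \<in> H
          \<and> (\<forall>f\<in>H. ell_pen ip \<gamma> n X T I (f_beta k n X A \<beta>) \<le> ell_pen ip \<gamma> n X T I f)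
          \<and> (\<forall>f\<in>H. (\<forall>g\<in>H. ell_pen ip \<gamma> n X T I f \<le> ell_pen ip \<gamma> n X T I g)
                     \<longrightarrow> f = f_beta k n X A \<beta>)"
      using fb_H main_H by blast
  qed
qed

end
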